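(* Let $G$ be a cofinite group and let $X=\{*\}\sqcup E(X)$ be a cofinite graph with a single vertex $*$. Let $\alpha\colon X\to G$ be a uniformly continuous map with $\alpha( * )=1_G$ and $\alpha(\overline e)=\alpha(e)^{-1}$ for all $e\in E(X)$, and let $\Gamma=\Gamma(G,X)$ be the cofinite Cayley graph. Then $\alpha$ generates $G$ topologically, i.e. $\overline{\langle\alpha(X)\rangle}=G$, if and only if $\Gamma$ is cofinitely connected.
   Context: A graph $\Gamma$ is a set $\Gamma=V(\Gamma)\sqcup E(\Gamma)$ with maps $s,t\colon E(\Gamma)\to V(\Gamma)$ and a fixed-point-free involution $e\mapsto\overline e$ of $E(\Gamma)$ with $s(\overline e)=t(e)$, $t(\overline e)=s(e)$. An equivalence relation $R$ on a graph is compatible if $R\subseteq (V\times V)\cup(E\times E)$, $(e,e')\in R$ implies $(s(e),s(e')),(t(e),t(e')),(\overline e,\overline{e'})\in R$, and $(e,\overline e)\notin R$ for all edges $e$; then $\Gamma/R$ is a graph. A cofinite entourage is an entourage that is an equivalence relation with finitely many classes. A cofinite graph is a graph with a Hausdorff uniformity in which the compatible cofinite entourages form a fundamental system. A cofinite group is a group with a Hausdorff uniformity having a fundamental system of cofinite congruences (cofinite entourages $R$ with $(a,b),(c,d)\in R\Rightarrow(ac,bd)\in R$). The cofinite Cayley graph $\Gamma(G,X)$ has $V=G\times\{*\}$, $E=G\times E(X)$, $s(g,e)=(g,* )$, $t(g,e)=(g\alpha(e),* )$, $\overline{(g,e)}=(g\alpha(e),\overline e)$, and carries the product uniformity of $G\times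 X$ (this makes it a cofinite graph). A cofinite graph is cofinitely connected if $\Gamma/R$ is path connected (any two vertices joined by a finite edge path $e_1\cdots e_n$ with $t(e_i)=s(e_{i+1})$) for every compatible cofinite entourage $R$. *)

theory Defs
  imports "HOL-Algebra.Generated_Groups"
begin

definition is_uniformity :: "'a set \<Rightarrow> ('a \<times> 'a) set set \<Rightarrow> bool" where
  "is_uniformity S U \<longleftrightarrow>
     S \<times> S \<in> U \<and>
     (\<forall>D\<in>U. Id_on S \<subseteq> D \<and> D \<subseteq> S \<times> S) \<and>
     (\<forall>D\<in>U. \<forall>D'. D \<subseteq> D' \<and> D' \<subseteq> S \<times> S \<longrightarrow> D' \<in> U) \<and>
     (\<forall>D\<in>U. \<forall>D'\<in>U. D \<inter> D' \<in> U) \<and>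
     (\<forall>D\<in>U. D\<inverse> \<in> U) \<and>
     (\<forall>D\<in>U. \<exists>D'\<in>U. D' O D' \<subseteq> D)"

definition hausdorff_uniformity :: "'a set \<Rightarrow> ('a \<times> 'a) set set \<Rightarrow> bool" where
  "hausdorff_uniformity S U \<longleftrightarrow> is_uniformity S U \<and> \<Inter>U = Id_on S"

definition cofinite_entourage :: "'a set \<Rightarrow> ('a \<times> 'a) set set \<Rightarrow> ('a \<times> 'a) set \<Rightarrow> bool" where
  "cofinite_entourage S U R \<longleftrightarrow> R \<in> U \<and> equiv S R \<and> finite (S // R)"

definition unif_continuous ::
  "('a \<times> 'a) set set \<Rightarrow> ('b \<times> 'b) set set \<Rightarrow> ('a \<Rightarrow> 'b) \<Rightarrow> bool" where
  "unif_continuous U1 U2 f \<longleftrightarrow> (\<forall>D\<in>U2. \<exists>D'\<in>U1. \<forall>(x, y)\<in>D'. (f x, f y) \<in> D)"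

definition unif_closure :: "'a set \<Rightarrow> ('a \<times> 'a) set set \<Rightarrow> 'a set \<Rightarrow> 'a set" where
  "unif_closure S U A = {x \<in> S. \<forall>D\<in>U. \<exists>a\<in>A. (x, a) \<in> D}"

definition prod_unif ::
  "'a set \<Rightarrow> ('a \<times> 'a) set set \<Rightarrow> 'b set \<Rightarrow> ('b \<times> 'b) set set \<Rightarrow> (('a \<times> 'b) \<times> ('a \<times> 'b)) set set" where
  "prod_unif S1 U1 S2 U2 =
     {D. D \<subseteq> (S1 \<times> S2) \<times> (S1 \<times> S2) \<and>
         (\<exists>D1\<in>U1. \<exists>D2\<in>U2. {((a, b), (a', b')). (a, a') \<in> D1 \<and> (b, b') \<in> D2} \<subseteq> D)}"

record 'a graph =
  verts :: "'a set"
  edges :: "'a set"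
  src :: "'a \<Rightarrow> 'a"
  tgt :: "'a \<Rightarrow> 'a"
  rev_edge :: "'a \<Rightarrow> 'a"

abbreviation gcarrier :: "'a graph \<Rightarrow> 'a set" where
  "gcarrier \<Gamma> \<equiv> verts \<Gamma> \<union> edges \<Gamma>"

definition is_graph :: "'a graph \<Rightarrow> bool" where
  "is_graph \<Gamma> \<longleftrightarrow> verts \<Gamma> \<inter> edges \<Gamma> = {} \<and>
     (\<forall>e\<in>edges \<Gamma>. src \<Gamma> e \<in> verts \<Gamma> \<and> tgt \<Gamma> e \<in> verts \<Gamma> \<and> rev_edge \<Gamma> e \<in> edges \<Gamma> \<and>
        rev_edge \<Gamma> (rev_edge \<Gamma> e) = e \<and> rev_edge \<Gamma> e \<noteq> e \<and>
        src \<Gamma> (rev_edge \<Gamma> e) = tgt \<Gamma> e \<and> tgt \<Gamma> (rev_edge \<Gamma> e) = src \<Gamma> e)"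

definition compatible :: "'a graph \<Rightarrow> ('a \<times> 'a) set \<Rightarrow> bool" where
  "compatible \<Gamma> R \<longleftrightarrow> equiv (gcarrier \<Gamma>) R \<and>
     R \<subseteq> (verts \<Gamma> \<times> verts \<Gamma>) \<union> (edges \<Gamma> \<times> edges \<Gamma>) \<and>
     (\<forall>e e'. (e, e') \<in> R \<and> e \<in> edges \<Gamma> \<longrightarrow>
        (src \<Gamma> e, src \<Gamma> e') \<in> R \<and> (tgt \<Gamma> e, tgt \<Gamma> e') \<in> R \<and>
        (rev_edge \<Gamma> e, rev_edge \<Gamma> e') \<in> R) \<and>
     (\<forall>e\<in>edges \<Gamma>. (e, rev_edge \<Gamma> e) \<notin> R)"

definition quot_graph :: "'a graph \<Rightarrow> ('a \<times> 'a) set \<Rightarrow> 'a set graph" where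
  "quot_graph \<Gamma> R =
     \<lparr> verts = verts \<Gamma> // R, edges = edges \<Gamma> // R,
       src = (\<lambda>C. R `` {src \<Gamma> (SOME e. e \<in> C)}),
       tgt = (\<lambda>C. R `` {tgt \<Gamma> (SOME e. e \<in> C)}),
       rev_edge = (\<lambda>C. R `` {rev_edge \<Gamma> (SOME e. e \<in> C)}) \<rparr>"

fun is_epath :: "'a graph \<Rightarrow> 'a \<Rightarrow> 'a list \<Rightarrow> 'a \<Rightarrow> bool" where
  "is_epath \<Gamma> v [] w \<longleftrightarrow> v = w"
| "is_epath \<Gamma> v (e # es) w \<longleftrightarrow> e \<in> edges \<Gamma> \<and> src \<Gamma> e = v \<and> is_epath \<Gamma> (tgt \<Gamma> e) es w"

definition graph_path_connected :: "'a graph \<Rightarrow> bool" where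
  "graph_path_connected \<Gamma> \<longleftrightarrow> (\<forall>v\<in>verts \<Gamma>. \<forall>w\<in>verts \<Gamma>. \<exists>es. is_epath \<Gamma> v es w)"

definition cofinite_graph :: "'a graph \<Rightarrow> ('a \<times> 'a) set set \<Rightarrow> bool" where
  "cofinite_graph \<Gamma> U \<longleftrightarrow> is_graph \<Gamma> \<and> hausdorff_uniformity (gcarrier \<Gamma>) U \<and>
     (\<forall>D\<in>U. \<exists>R. compatible \<Gamma> R \<and> cofinite_entourage (gcarrier \<Gamma>) U R \<and> R \<subseteq> D)"

definition cofinite_congruence :: "('g, 'm) monoid_scheme \<Rightarrow> ('g \<times> 'g) set set \<Rightarrow> ('g \<times> 'g) set \<Rightarrow> bool" where
  "cofinite_congruence G U R \<longleftrightarrow> cofinite_entourage (carrier G) U R \<and>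
     (\<forall>a b c d. (a, b) \<in> R \<and> (c, d) \<in> R \<longrightarrow> (a \<otimes>\<^bsub>G\<^esub> c, b \<otimes>\<^bsub>G\<^esub> d) \<in> R)"

definition cofinite_group :: "('g, 'm) monoid_scheme \<Rightarrow> ('g \<times> 'g) set set \<Rightarrow> bool" where
  "cofinite_group G U \<longleftrightarrow> group G \<and> hausdorff_uniformity (carrier G) U \<and>
     (\<forall>D\<in>U. \<exists>R. cofinite_congruence G U R \<and> R \<subseteq> D)"

definition cofinitely_connected :: "'a graph \<Rightarrow> ('a \<times> 'a) set set \<Rightarrow> bool" where
  "cofinitely_connected \<Gamma> U \<longleftrightarrow>
     (\<forall>R. compatible \<Gamma> R \<and> cofinite_entourage (gcarrier \<Gamma>) U R \<longrightarrow>
          graph_path_connected (quot_graph \<Gamma> R))"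

definition cayley_graph ::
  "('g, 'm) monoid_scheme \<Rightarrow> 'x graph \<Rightarrow> 'x \<Rightarrow> ('x \<Rightarrow> 'g) \<Rightarrow> ('g \<times> 'x) graph" where
  "cayley_graph G X star \<alpha> =
     \<lparr> verts = carrier G \<times> {star}, edges = carrier G \<times> edges X,
       src = (\<lambda>(g, e). (g, star)),
       tgt = (\<lambda>(g, e). (g \<otimes>\<^bsub>G\<^esub> \<alpha> e, star)),
       rev_edge = (\<lambda>(g, e). (g \<otimes>\<^bsub>G\<^esub> \<alpha> e, rev_edge X e)) \<rparr>"

definition cayley_unif ::
  "('g, 'm) monoid_scheme \<Rightarrow> ('g \<times> 'g) set set \<Rightarrow> 'x graph \<Rightarrow> ('x \<times> 'x) set set
     \<Rightarrow> (('g \<times> 'x) \<times> ('g \<times> 'x)) set set" where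
  "cayley_unif G UG X UX = prod_unif (carrier G) UG (gcarrier X) UX"

end

theory Submission
  imports Defs
begin

lemma cay_simps[simp]:
  "verts (cayley_graph G X star \<alpha>) = carrier G \<times> {star}"
  "edges (cayley_graph G X star \<alpha>) = carrier G \<times> edges X"
  "src (cayley_graph G X star \<alpha>) (g, e) = (g, star)"
  "tgt (cayley_graph G X star \<alpha>) (g, e) = (g \<otimes>\<^bsub>G\<^esub> \<alpha> e, star)"
  "rev_edge (cayley_graph G X star \<alpha>) (g, e) = (g \<otimes>\<^bsub>G\<^esub> \<alpha> e, rev_edge X e)"
  by (simp_all add: cayley_graph_def)

lemma quot_simps[simp]:
  "verts (quot_graph \<Gamma> R) = verts \<Gamma> // R"
  "edges (quot_graph \<Gamma> R) = edges \<Gamma> // R"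
  "src (quot_graph \<Gamma> R) C = R `` {src \<Gamma> (SOME e. e \<in> C)}"
  "tgt (quot_graph \<Gamma> R) C = R `` {tgt \<Gamma> (SOME e. e \<in> C)}"
  by (simp_all add: quot_graph_def)

lemma epath_append:
  "is_epath \<Gamma> u xs v \<Longrightarrow> is_epath \<Gamma> v ys w \<Longrightarrow> is_epath \<Gamma> u (xs @ ys) w"
  by (induction xs arbitrary: u) auto

lemma cayley_path:
  assumes grp: "group G" and al: "\<alpha> ` gcarrier X \<subseteq> carrier G"
    and vx: "verts X = {star}" and a1: "\<alpha> star = \<one>\<^bsub>G\<^esub>"
    and arev: "\<forall>e\<in>edges X. \<alpha> (rev_edge X e) = inv\<^bsub>G\<^esub> (\<alpha> e)"
    and gx: "is_graph X"
    and h: "h \<in> generate G (\<alpha> ` gcarrier X)"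
  shows "\<forall>g\<in>carrier G. \<exists>es. is_epath (cayley_graph G X star \<alpha>) (g, star) es (g \<otimes>\<^bsub>G\<^esub> h, star)"
  using h
proof (induction rule: generate.induct)
  case one
  then show ?case using grp by (auto intro!: exI[of _ "[]"] simp: group.is_monoid monoid.r_one)
next
  case (incl h)
  then obtain x where x: "x \<in> gcarrier X" "h = \<alpha> x" by auto
  show ?case
  proof
    fix g assume g: "g \<in> carrier G"
    show "\<exists>es. is_epath (cayley_graph G X star \<alpha>) (g, star) es (g \<otimes>\<^bsub>G\<^esub> h, star)"
    proof (cases "x = star")
      case True
      then show ?thesis using g x a1 grp by (auto intro!: exI[of _ "[]"] simp: group.is_monoid monoid.r_one)
    next
      case False
      then have "x \<in> edges X" using x vx by auto
      then show ?thesis using g x by (auto intro!: exI[of _ "[(g, x)]"])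
    qed
  qed
next
  case (inv h)
  then obtain x where x: "x \<in> gcarrier X" "h = \<alpha> x" by auto
  show ?case
  proof
    fix g assume g: "g \<in> carrier G"
    show "\<exists>es. is_epath (cayley_graph G X star \<alpha>) (g, star) es (g \<otimes>\<^bsub>G\<^esub> inv\<^bsub>G\<^esub> h, star)"
    proof (cases "x = star")
      case True
      then show ?thesis using g x a1 grp
        by (auto intro!: exI[of _ "[]"] simp: group.is_monoid monoid.r_one monoid.inv_one)
    next
      case False
      then have xe: "x \<in> edges X" using x vx by auto
      then have "rev_edge X x \<in> edges X" using gx unfolding is_graph_def by auto
      then show ?thesis using g x xe arev by (auto intro!: exI[of _ "[(g, rev_edge X x)]"])
    qed
  qed
next
  case (eng h1 h2)
  show ?case
  proof
    fix g assume g: "g \<in> carrier G"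
    have hc: "h1 \<in> carrier G" "h2 \<in> carrier G"
      using eng(1,2) group.generate_in_carrier[OF grp al] by auto
    obtain es1 where 1: "is_epath (cayley_graph G X star \<alpha>) (g, star) es1 (g \<otimes>\<^bsub>G\<^esub> h1, star)"
      using eng.IH(1) g by blast
    have gh: "g \<otimes>\<^bsub>G\<^esub> h1 \<in> carrier G" using g hc grp by (simp add: group.is_monoid monoid.m_closed)
    obtain es2 where 2: "is_epath (cayley_graph G X star \<alpha>) (g \<otimes>\<^bsub>G\<^esub> h1, star) es2 (g \<otimes>\<^bsub>G\<^esub> h1 \<otimes>\<^bsub>G\<^esub> h2, star)"
      using eng.IH(2) gh by blast
    have "g \<otimes>\<^bsub>G\<^esub> h1 \<otimes>\<^bsub>G\<^esub> h2 = g \<otimes>\<^bsub>G\<^esub> (h1 \<otimes>\<^bsub>G\<^esub> h2)"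
      using g hc grp by (simp add: group.is_monoid monoid.m_assoc)
    then show "\<exists>es. is_epath (cayley_graph G X star \<alpha>) (g, star) es (g \<otimes>\<^bsub>G\<^esub> (h1 \<otimes>\<^bsub>G\<^esub> h2), star)"
      using epath_append[OF 1 2] by auto
  qed
qed

lemma project_path:
  assumes comp: "compatible \<Gamma> R"
  shows "is_epath \<Gamma> v es w \<Longrightarrow> is_epath (quot_graph \<Gamma> R) (R `` {v}) (map (\<lambda>e. R `` {e}) es) (R `` {w})"
proof (induction es arbitrary: v)
  case Nil
  then show ?case by simp
next
  case (Cons e es)
  have eq: "equiv (gcarrier \<Gamma>) R" using comp unfolding compatible_def by auto
  have e: "e \<in> edges \<Gamma>" "src \<Gamma> e = v" "is_epath \<Gamma> (tgt \<Gamma> e) es w" using Cons.prems by auto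
  have "e \<in> R `` {e}" using eq e(1) by (auto simp: equiv_def refl_on_def)
  then have "(SOME e'. e' \<in> R `` {e}) \<in> R `` {e}" by (rule someI)
  then have r: "(e, SOME e'. e' \<in> R `` {e}) \<in> R" by simp
  define e' where "e' = (SOME e'. e' \<in> R `` {e})"
  have r': "(e, e') \<in> R" using r e'_def by simp
  have s: "(src \<Gamma> e, src \<Gamma> e') \<in> R" "(tgt \<Gamma> e, tgt \<Gamma> e') \<in> R"
    using comp r' e(1) unfolding compatible_def by blast+
  have "R `` {src \<Gamma> e'} = R `` {v}" using equiv_class_eq[OF eq s(1)] e(2) by simp
  moreover have "R `` {tgt \<Gamma> e'} = R `` {tgt \<Gamma> e}" using equiv_class_eq[OF eq s(2)] by simp
  moreover have "R `` {e} \<in> edges \<Gamma> // R" using e(1) by (rule quotientI)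
  ultimately show ?case using Cons.IH[OF e(3)] e'_def by simp
qed

lemma prod_equiv:
  assumes "equiv A N" "equiv B S"
  shows "equiv (A \<times> B) {((g, a), (g', a')). (g, g') \<in> N \<and> (a, a') \<in> S}"
proof -
  let ?R = "{((g, a), (g', a')). (g, g') \<in> N \<and> (a, a') \<in> S}"
  have N: "N \<subseteq> A \<times> A" "\<And>x. x \<in> A \<Longrightarrow> (x, x) \<in> N" "\<And>x y. (x, y) \<in> N \<Longrightarrow> (y, x) \<in> N"
    "\<And>x y z. (x, y) \<in> N \<Longrightarrow> (y, z) \<in> N \<Longrightarrow> (x, z) \<in> N"
    using assms(1) unfolding equiv_def refl_on_def by (blast dest: symD transD)+
  have S: "S \<subseteq> B \<times> B" "\<And>x. x \<in> B \<Longrightarrow> (x, x) \<in> S" "\<And>x y. (x, y) \<in> S \<Longrightarrow> (y, x) \<in> S"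
    "\<And>x y z. (x, y) \<in> S \<Longrightarrow> (y, z) \<in> S \<Longrightarrow> (x, z) \<in> S"
    using assms(2) unfolding equiv_def refl_on_def by (blast dest: symD transD)+
  have "refl_on (A \<times> B) ?R" unfolding refl_on_def using N(1,2) S(1,2) by fast
  moreover have "sym ?R" by (rule symI) (use N(3) S(3) in fast)
  moreover have "trans ?R" by (rule transI) (use N(4) S(4) in fast)
  moreover have "?R \<subseteq> (A \<times> B) \<times> (A \<times> B)" using N(1) S(1) by auto
  ultimately show ?thesis by (simp add: equiv_def)
qed

lemma prod_quot_finite:
  assumes "equiv A N" "equiv B S" "finite (A // N)" "finite (B // S)"
  shows "finite ((A \<times> B) // {((g, a), (g', a')). (g, g') \<in> N \<and> (a, a') \<in> S})"
proof -
  let ?R = "{((g, a), (g', a')). (g, g') \<in> N \<and> (a, a') \<in> S}"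
  have "(A \<times> B) // ?R \<subseteq> (\<lambda>(P, Q). P \<times> Q) ` (A // N \<times> B // S)"
  proof
    fix C assume "C \<in> (A \<times> B) // ?R"
    then obtain g a where ga: "g \<in> A" "a \<in> B" "C = ?R `` {(g, a)}"
      by (auto elim!: quotientE)
    then have "C = N `` {g} \<times> S `` {a}" by auto
    moreover have "(N `` {g}, S `` {a}) \<in> A // N \<times> B // S" using ga by (auto intro: quotientI)
    ultimately show "C \<in> (\<lambda>(P, Q). P \<times> Q) ` (A // N \<times> B // S)" by force
  qed
  then show ?thesis using assms(3,4) by (meson finite_SigmaI finite_imageI finite_subset)
qed


theorem mainTheorem3:
  fixes G :: "('g, 'm) monoid_scheme" and UG :: "('g \<times> 'g) set set"
    and X :: "'x graph" and UX :: "('x \<times> 'x) set set"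
    and star :: 'x and \<alpha> :: "'x \<Rightarrow> 'g"
  assumes "cofinite_group G UG"
    and "cofinite_graph X UX"
    and "verts X = {star}"
    and "\<alpha> ` gcarrier X \<subseteq> carrier G"
    and "unif_continuous UX UG \<alpha>"
    and "\<alpha> star = \<one>\<^bsub>G\<^esub>"
    and "\<forall>e\<in>edges X. \<alpha> (rev_edge X e) = inv\<^bsub>G\<^esub> (\<alpha> e)"
  shows "unif_closure (carrier G) UG (generate G (\<alpha> ` gcarrier X)) = carrier G \<longleftrightarrow>
         cofinitely_connected (cayley_graph G X star \<alpha>) (cayley_unif G UG X UX)"
proof -
  note cg = assms(1) and cx = assms(2) and vx = assms(3) and al = assms(4) and uc = assms(5)
    and a1 = assms(6) and arev = assms(7)
  have grp: "group G" using cg unfolding cofinite_group_def by auto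
  interpret group G by (rule grp)
  have gx: "is_graph X" using cx unfolding cofinite_graph_def by auto
  have uX: "is_uniformity (gcarrier X) UX" using cx unfolding cofinite_graph_def hausdorff_uniformity_def by auto
  let ?H = "generate G (\<alpha> ` gcarrier X)"
  let ?\<Gamma> = "cayley_graph G X star \<alpha>"
  have Hc: "?H \<subseteq> carrier G" using generate_incl[OF al] .
  have gcG: "gcarrier ?\<Gamma> = carrier G \<times> gcarrier X" using vx by auto
  have congr: "\<And>N. cofinite_congruence G UG N \<Longrightarrow> N \<in> UG \<and> equiv (carrier G) N \<and> finite (carrier G // N) \<and>
      (\<forall>a b c d. (a, b) \<in> N \<and> (c, d) \<in> N \<longrightarrow> (a \<otimes>\<^bsub>G\<^esub> c, b \<otimes>\<^bsub>G\<^esub> d) \<in> N)"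
    unfolding cofinite_congruence_def cofinite_entourage_def by auto
  show ?thesis
  proof
    assume cl: "unif_closure (carrier G) UG ?H = carrier G"
    show "cofinitely_connected ?\<Gamma> (cayley_unif G UG X UX)"
      unfolding cofinitely_connected_def
    proof (intro allI impI)
      fix R assume "compatible ?\<Gamma> R \<and> cofinite_entourage (gcarrier ?\<Gamma>) (cayley_unif G UG X UX) R"
      then have comp: "compatible ?\<Gamma> R" and Ru: "R \<in> cayley_unif G UG X UX"
        and eqR: "equiv (gcarrier ?\<Gamma>) R"
        unfolding cofinite_entourage_def by auto
      obtain D1 D2 where D1: "D1 \<in> UG" and D2: "D2 \<in> UX"
        and sub: "{((a, b), (a', b')). (a, a') \<in> D1 \<and> (b, b') \<in> D2} \<subseteq> R"
        using Ru unfolding cayley_unif_def prod_unif_def by blast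
      obtain N where N: "cofinite_congruence G UG N" "N \<subseteq> D1"
        using cg D1 unfolding cofinite_group_def by blast
      note Nc = congr[OF N(1)]
      have Id2: "Id_on (gcarrier X) \<subseteq> D2" using uX D2 unfolding is_uniformity_def by auto
      have key: "\<And>g g' b. (g, g') \<in> N \<Longrightarrow> b \<in> gcarrier X \<Longrightarrow> ((g, b), (g', b)) \<in> R"
        using sub N(2) Id2 by blast
      have NG: "N \<subseteq> carrier G \<times> carrier G" and Nrefl: "\<And>x. x \<in> carrier G \<Longrightarrow> (x, x) \<in> N"
        using Nc unfolding equiv_def refl_on_def by auto
      show "graph_path_connected (quot_graph ?\<Gamma> R)"
        unfolding graph_path_connected_def
      proof (intro ballI)
        fix v w assume v: "v \<in> verts (quot_graph ?\<Gamma> R)" and w: "w \<in> verts (quot_graph ?\<Gamma> R)"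
        obtain g where g: "g \<in> carrier G" "v = R `` {(g, star)}"
          using v by (auto elim!: quotientE)
        obtain g' where g': "g' \<in> carrier G" "w = R `` {(g', star)}"
          using w by (auto elim!: quotientE)
        have "inv\<^bsub>G\<^esub> g \<otimes>\<^bsub>G\<^esub> g' \<in> unif_closure (carrier G) UG ?H" using cl g g' by simp
        then obtain h where h: "h \<in> ?H" "(inv\<^bsub>G\<^esub> g \<otimes>\<^bsub>G\<^esub> g', h) \<in> N"
          using Nc unfolding unif_closure_def by blast
        have hc: "h \<in> carrier G" using h Hc by auto
        have "(g \<otimes>\<^bsub>G\<^esub> (inv\<^bsub>G\<^esub> g \<otimes>\<^bsub>G\<^esub> g'), g \<otimes>\<^bsub>G\<^esub> h) \<in> N" using Nc Nrefl[OF g(1)] h(2) by blast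
        moreover have "g \<otimes>\<^bsub>G\<^esub> (inv\<^bsub>G\<^esub> g \<otimes>\<^bsub>G\<^esub> g') = g'" using g g' by (simp add: m_assoc[symmetric])
        ultimately have gg: "(g', g \<otimes>\<^bsub>G\<^esub> h) \<in> N" by simp
        obtain es where es: "is_epath ?\<Gamma> (g, star) es (g \<otimes>\<^bsub>G\<^esub> h, star)"
          using cayley_path[OF grp al vx a1 arev gx h(1)] g by blast
        have "R `` {(g \<otimes>\<^bsub>G\<^esub> h, star)} = R `` {(g', star)}"
          using equiv_class_eq[OF eqR key[OF gg, of star]] vx by auto
        then show "\<exists>es. is_epath (quot_graph ?\<Gamma> R) v es w"
          using project_path[OF comp es] g g' by auto
      qed
    qed
  next
    assume cc: "cofinitely_connected ?\<Gamma> (cayley_unif G UG X UX)"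
    show "unif_closure (carrier G) UG ?H = carrier G"
    proof
      show "unif_closure (carrier G) UG ?H \<subseteq> carrier G" unfolding unif_closure_def by auto
      show "carrier G \<subseteq> unif_closure (carrier G) UG ?H"
      proof
        fix x assume x: "x \<in> carrier G"
        have "\<exists>a\<in>?H. (x, a) \<in> D" if D: "D \<in> UG" for D
        proof -
          obtain N where N: "cofinite_congruence G UG N" "N \<subseteq> D"
            using cg D unfolding cofinite_group_def by blast
          note Nc = congr[OF N(1)]
          have NG: "N \<subseteq> carrier G \<times> carrier G" and Nrefl: "\<And>x. x \<in> carrier G \<Longrightarrow> (x, x) \<in> N"
            using Nc unfolding equiv_def refl_on_def by auto
          obtain D' where D': "D' \<in> UX" "\<forall>(p, q)\<in>D'. (\<alpha> p, \<alpha> q) \<in> N"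
            using uc Nc unfolding unif_continuous_def by blast
          obtain S where S: "compatible X S" "cofinite_entourage (gcarrier X) UX S" "S \<subseteq> D'"
            using cx D'(1) unfolding cofinite_graph_def by blast
          have eqS: "equiv (gcarrier X) S" and SU: "S \<in> UX" and fS: "finite (gcarrier X // S)"
            using S(2) unfolding cofinite_entourage_def by auto
          have SX: "S \<subseteq> gcarrier X \<times> gcarrier X" using eqS unfolding equiv_def refl_on_def by auto
          have Sst: "(star, star) \<in> S" using eqS vx unfolding equiv_def refl_on_def by auto
          have Sa: "\<And>p q. (p, q) \<in> S \<Longrightarrow> (\<alpha> p, \<alpha> q) \<in> N" using D'(2) S(3) by blast
          define R where "R = {((g, a), (g', a')). (g, g') \<in> N \<and> (a, a') \<in> S}"
          have eqR: "equiv (gcarrier ?\<Gamma>) R"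
            unfolding gcG R_def by (rule prod_equiv[OF _ eqS]) (use Nc in auto)
          have finR: "finite (gcarrier ?\<Gamma> // R)"
            unfolding gcG R_def by (rule prod_quot_finite[OF _ eqS _ fS]) (use Nc in auto)
          have RU: "R \<in> cayley_unif G UG X UX"
            unfolding cayley_unif_def prod_unif_def
          proof (intro CollectI conjI bexI)
            show "R \<subseteq> (carrier G \<times> gcarrier X) \<times> carrier G \<times> gcarrier X"
              unfolding R_def using NG SX by auto
            show "{((a, b), a', b'). (a, a') \<in> N \<and> (b, b') \<in> S} \<subseteq> R" unfolding R_def by auto
          qed (use Nc SU in auto)
          have Sgr: "S \<subseteq> (verts X \<times> verts X) \<union> (edges X \<times> edges X)"
            and Scomp: "\<And>e e'. (e, e') \<in> S \<Longrightarrow> e \<in> edges X \<Longrightarrow> (rev_edge X e, rev_edge X e') \<in> S"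
            and Snr: "\<And>e. e \<in> edges X \<Longrightarrow> (e, rev_edge X e) \<notin> S"
            using S(1) unfolding compatible_def by auto
          have c2: "R \<subseteq> verts ?\<Gamma> \<times> verts ?\<Gamma> \<union> edges ?\<Gamma> \<times> edges ?\<Gamma>"
            unfolding R_def using NG Sgr vx by auto
          have c3: "\<forall>e e'. (e, e') \<in> R \<and> e \<in> edges ?\<Gamma> \<longrightarrow>
              (src ?\<Gamma> e, src ?\<Gamma> e') \<in> R \<and> (tgt ?\<Gamma> e, tgt ?\<Gamma> e') \<in> R \<and>
                (rev_edge ?\<Gamma> e, rev_edge ?\<Gamma> e') \<in> R"
          proof (intro allI impI)
            fix e e' assume ee: "(e, e') \<in> R \<and> e \<in> edges ?\<Gamma>"
            obtain g a where e: "e = (g, a)" by (cases e)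
            obtain g' a' where e': "e' = (g', a')" by (cases e')
            have gg: "(g, g') \<in> N" and aa: "(a, a') \<in> S" and ae: "a \<in> edges X"
              using ee unfolding e e' R_def by auto
            have "(g \<otimes>\<^bsub>G\<^esub> \<alpha> a, g' \<otimes>\<^bsub>G\<^esub> \<alpha> a') \<in> N" using Nc gg Sa[OF aa] by blast
            then show "(src ?\<Gamma> e, src ?\<Gamma> e') \<in> R \<and> (tgt ?\<Gamma> e, tgt ?\<Gamma> e') \<in> R \<and>
                (rev_edge ?\<Gamma> e, rev_edge ?\<Gamma> e') \<in> R"
              unfolding e e' R_def using gg Sst Scomp[OF aa ae] by auto
          qed
          have c4: "\<forall>e\<in>edges ?\<Gamma>. (e, rev_edge ?\<Gamma> e) \<notin> R"
          proof
            fix e assume e0: "e \<in> edges ?\<Gamma>"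
            obtain g a where e: "e = (g, a)" by (cases e)
            have "a \<in> edges X" using e0 e by auto
            then show "(e, rev_edge ?\<Gamma> e) \<notin> R" unfolding e R_def using Snr by auto
          qed
          have compR: "compatible ?\<Gamma> R"
            unfolding compatible_def using eqR c2 c3 c4 by blast
          have "graph_path_connected (quot_graph ?\<Gamma> R)"
            using cc compR eqR finR RU unfolding cofinitely_connected_def cofinite_entourage_def by blast
          moreover have "R `` {(\<one>\<^bsub>G\<^esub>, star)} \<in> verts (quot_graph ?\<Gamma> R)" "R `` {(x, star)} \<in> verts (quot_graph ?\<Gamma> R)"
            using x by (auto intro!: quotientI)
          ultimately obtain es where es: "is_epath (quot_graph ?\<Gamma> R) (R `` {(\<one>\<^bsub>G\<^esub>, star)}) es (R `` {(x, star)})"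
            unfolding graph_path_connected_def by blast
          have lift: "is_epath (quot_graph ?\<Gamma> R) C es C' \<Longrightarrow> (h, star) \<in> C \<Longrightarrow> h \<in> ?H \<Longrightarrow>
              \<exists>h'\<in>?H. (h', star) \<in> C'" for es C C' h
          proof (induction es arbitrary: C h)
            case Nil
            then show ?case by auto
          next
            case (Cons E es)
            from Cons.prems have E: "E \<in> edges ?\<Gamma> // R" and sE: "src (quot_graph ?\<Gamma> R) E = C"
              and rest: "is_epath (quot_graph ?\<Gamma> R) (tgt (quot_graph ?\<Gamma> R) E) es C'" by auto
            obtain e1 where e1: "e1 \<in> edges ?\<Gamma>" "E = R `` {e1}" using E by (auto elim!: quotientE)
            have "e1 \<in> E" using e1 eqR unfolding equiv_def refl_on_def by auto
            then have "(SOME e. e \<in> E) \<in> E" by (rule someI)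
            define e0 where "e0 = (SOME e. e \<in> E)"
            have "e0 \<in> E" using \<open>(SOME e. e \<in> E) \<in> E\<close> e0_def by simp
            then have "(e1, e0) \<in> R" using e1 by auto
            then obtain g0 a0 where e0s: "e0 = (g0, a0)" and ga: "g0 \<in> carrier G" "a0 \<in> gcarrier X"
              unfolding R_def using NG SX by auto
            have "src ?\<Gamma> e0 = (g0, star)" "tgt ?\<Gamma> e0 = (g0 \<otimes>\<^bsub>G\<^esub> \<alpha> a0, star)" using e0s by auto
            then have C: "C = R `` {(g0, star)}"
              and T: "tgt (quot_graph ?\<Gamma> R) E = R `` {(g0 \<otimes>\<^bsub>G\<^esub> \<alpha> a0, star)}"
              using sE e0_def by auto
            have "(g0, h) \<in> N" using Cons.prems(2) C unfolding R_def by auto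
            moreover have ac: "\<alpha> a0 \<in> carrier G" using al ga by auto
            ultimately have "(g0 \<otimes>\<^bsub>G\<^esub> \<alpha> a0, h \<otimes>\<^bsub>G\<^esub> \<alpha> a0) \<in> N" using Nc Nrefl by blast
            then have "(h \<otimes>\<^bsub>G\<^esub> \<alpha> a0, star) \<in> R `` {(g0 \<otimes>\<^bsub>G\<^esub> \<alpha> a0, star)}"
              unfolding R_def using Sst by auto
            then have "(h \<otimes>\<^bsub>G\<^esub> \<alpha> a0, star) \<in> tgt (quot_graph ?\<Gamma> R) E"
              by (subst T)
            moreover have "h \<otimes>\<^bsub>G\<^esub> \<alpha> a0 \<in> ?H"
              using Cons.prems(3) ga by (auto intro: generate.eng generate.incl)
            ultimately show ?case using Cons.IH[OF rest] by blast
          qed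
          obtain h' where "h' \<in> ?H" "(h', star) \<in> R `` {(x, star)}"
          proof -
            have "((\<one>\<^bsub>G\<^esub>, star), (\<one>\<^bsub>G\<^esub>, star)) \<in> R" unfolding R_def using Nrefl Sst by auto
            then show ?thesis using lift[OF es _ generate.one] that by auto
          qed
          then show ?thesis unfolding R_def using N(2) by auto
        qed
        then show "x \<in> unif_closure (carrier G) UG ?H" using x unfolding unif_closure_def by auto
      qed
    qed
  qed
qed

end
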